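(* Let $\mu_1,\dots,\mu_k$ be i.i.d. $\sim\Gamma$, where $\Gamma$ is a $1$-regular distribution on $[0,1]$ with density $g$ and CDF $G(z)=\int_0^zg(x)\,dx$. Let $\mu_{(k)}\le\mu_{(k-1)}\le\dots\le\mu_{(1)}$ be the order statistics and $\Delta_{(i)}=\mu_{(1)}-\mu_{(i)}$. Then: (1) for $2\le i\le k$, $U_i=\Delta_{(i)}$ has density $$g_{U_i}(u)=k(k-1)\binom{k-2}{i-2}\int_0^{1-u}\bigl(G(u+z)-G(z)\bigr)^{i-2}g(u+z)g(z)G(z)^{k-i}\,dz;$$ (2) if $g(x)\le D_0$ for all $x\in[0,1]$, then for any $i\ge3$, $\mathbb{E}[1/\Delta_{(i)}]\le D_0k/(i-2)$.
   Context: $1$-regular: there exist $0<c_0<C_0$ with $c_0\epsilon\le\mathbb{P}_\Gamma(\mu>1-\epsilon)\le\mathbb{P}_\Gamma(\mu\ge1-\epsilon)\le C_0\epsilon$ for all $\epsilon\in(0,1]$. *)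

theory Defs
  imports "HOL-Probability.Probability"
begin

definition one_regular :: "real measure \<Rightarrow> bool" where
  "one_regular Gam \<longleftrightarrow> (\<exists>c0 C0::real. 0 < c0 \<and> c0 < C0 \<and>
     (\<forall>\<epsilon>\<in>{0<..1}. c0 * \<epsilon> \<le> measure Gam {1 - \<epsilon><..}
        \<and> measure Gam {1 - \<epsilon><..} \<le> measure Gam {1 - \<epsilon>..}
        \<and> measure Gam {1 - \<epsilon>..} \<le> C0 * \<epsilon>))"

definition order_stat_desc :: "nat \<Rightarrow> (nat \<Rightarrow> real) \<Rightarrow> nat \<Rightarrow> real" where
  "order_stat_desc k x i = rev (sort (map x [1..<Suc k])) ! (i - 1)"

definition gap_stat :: "nat \<Rightarrow> (nat \<Rightarrow> real) \<Rightarrow> nat \<Rightarrow> real" where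
  "gap_stat k x i = order_stat_desc k x 1 - order_stat_desc k x i"

end

theory Submission
  imports Defs
begin


lemma os_le_iff:
  assumes "1 \<le> i" "i \<le> n"
  shows "order_stat_desc n x i \<le> t \<longleftrightarrow> card {j\<in>{1..n}. t < x j} < i"
proof -
  define ys where "ys = rev (sort (map x [1..<Suc n]))"
  have len: "length ys = n" by (simp add: ys_def)
  have sw: "sorted_wrt (\<ge>) ys" by (simp add: ys_def sorted_wrt_rev)
  have mono: "ys ! q \<le> ys ! p" if "p \<le> q" "q < n" for p q
  proof (cases "p = q")
    case False
    thus ?thesis using sorted_wrt_nth_less[OF sw, of p q] that len by simp
  qed simp
  have cnt: "card {j\<in>{1..n}. P (x j)} = card {m. m < n \<and> P (ys ! m)}" for P
  proof -
  have "card {j\<in>{1..n}. P (x j)} = length (filter (\<lambda>y. P y) (map x [1..<Suc n]))"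
  proof -
    have "length (filter (\<lambda>y. P y) (map x [1..<Suc n])) = length (filter (\<lambda>j. P (x j)) [1..<Suc n])"
      by (simp add: filter_map comp_def)
    also have "\<dots> = card ({j. P (x j)} \<inter> set [1..<Suc n])"
      by (rule distinct_length_filter) simp
    also have "\<dots> = card {j\<in>{1..n}. P (x j)}"
      by (rule arg_cong[where f=card]) auto
    finally show ?thesis by simp
  qed
  also have "\<dots> = length (filter (\<lambda>y. P y) ys)"
    proof -
      have "mset (rev (sort (map x [1..<Suc n]))) = mset (map x [1..<Suc n])" by simp
      hence "size (mset (filter (\<lambda>y. P y) (map x [1..<Suc n]))) = size (mset (filter (\<lambda>y. P y) (rev (sort (map x [1..<Suc n])))))"
        by (simp only: mset_filter)
      thus ?thesis by (simp only: size_mset ys_def)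
    qed
  also have "\<dots> = card {m. m < n \<and> P (ys ! m)}"
    by (simp add: length_filter_conv_card len)
  finally show ?thesis .
  qed
  note c = cnt[of "\<lambda>y. t < y"]
  have os: "order_stat_desc n x i = ys ! (i - 1)" by (simp add: order_stat_desc_def ys_def)
  show ?thesis
  proof
    assume "order_stat_desc n x i \<le> t"
    hence "{m. m < n \<and> t < ys ! m} \<subseteq> {..<i-1}"
    proof (intro subsetI)
      fix m assume m: "m \<in> {m. m < n \<and> t < ys ! m}" and le: "order_stat_desc n x i \<le> t"
      show "m \<in> {..<i-1}"
      proof (rule ccontr)
        assume "m \<notin> {..<i-1}"
        hence "ys ! m \<le> ys ! (i-1)" using mono[of "i-1" m] m by auto
        thus False using m le os by auto
      qed
    qed
    hence "card {m. m < n \<and> t < ys ! m} \<le> i - 1"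
      by (metis card_lessThan card_mono finite_lessThan)
    thus "card {j\<in>{1..n}. t < x j} < i" using c assms by linarith
  next
    assume "card {j\<in>{1..n}. t < x j} < i"
    show "order_stat_desc n x i \<le> t"
    proof (rule ccontr)
      assume "\<not> ?thesis"
      hence "{..<i} \<subseteq> {m. m < n \<and> t < ys ! m}"
      proof (intro subsetI)
        fix m assume m: "m \<in> {..<i}" and le: "\<not> order_stat_desc n x i \<le> t"
        hence "ys ! (i-1) \<le> ys ! m" using mono[of m "i-1"] assms by auto
        thus "m \<in> {m. m < n \<and> t < ys ! m}" using m le os assms by auto
      qed
      hence "i \<le> card {m. m < n \<and> t < ys ! m}"
        by (metis card_lessThan card_mono finite_Collect_conjI finite_Collect_less_nat)
      thus False using c \<open>card {j\<in>{1..n}. t < x j} < i\<close> by linarith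
    qed
  qed
qed

lemma os_ge_card:
  assumes "1 \<le> i" "i \<le> n"
  shows "i \<le> card {j\<in>{1..n}. order_stat_desc n x i \<le> x j}"
proof -
  define ys where "ys = rev (sort (map x [1..<Suc n]))"
  have len: "length ys = n" by (simp add: ys_def)
  have sw: "sorted_wrt (\<ge>) ys" by (simp add: ys_def sorted_wrt_rev)
  have mono: "ys ! q \<le> ys ! p" if "p \<le> q" "q < n" for p q
  proof (cases "p = q")
    case False
    thus ?thesis using sorted_wrt_nth_less[OF sw, of p q] that len by simp
  qed simp
  have cnt: "card {j\<in>{1..n}. P (x j)} = card {m. m < n \<and> P (ys ! m)}" for P
  proof -
  have "card {j\<in>{1..n}. P (x j)} = length (filter (\<lambda>y. P y) (map x [1..<Suc n]))"
  proof -
    have "length (filter (\<lambda>y. P y) (map x [1..<Suc n])) = length (filter (\<lambda>j. P (x j)) [1..<Suc n])"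
      by (simp add: filter_map comp_def)
    also have "\<dots> = card ({j. P (x j)} \<inter> set [1..<Suc n])"
      by (rule distinct_length_filter) simp
    also have "\<dots> = card {j\<in>{1..n}. P (x j)}"
      by (rule arg_cong[where f=card]) auto
    finally show ?thesis by simp
  qed
  also have "\<dots> = length (filter (\<lambda>y. P y) ys)"
    proof -
      have "mset (rev (sort (map x [1..<Suc n]))) = mset (map x [1..<Suc n])" by simp
      hence "size (mset (filter (\<lambda>y. P y) (map x [1..<Suc n]))) = size (mset (filter (\<lambda>y. P y) (rev (sort (map x [1..<Suc n])))))"
        by (simp only: mset_filter)
      thus ?thesis by (simp only: size_mset ys_def)
    qed
  also have "\<dots> = card {m. m < n \<and> P (ys ! m)}"
    by (simp add: length_filter_conv_card len)
  finally show ?thesis .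
  qed
  have os: "order_stat_desc n x i = ys ! (i - 1)" by (simp add: order_stat_desc_def ys_def)
  have "{..<i} \<subseteq> {m. m < n \<and> order_stat_desc n x i \<le> ys ! m}"
  proof (intro subsetI)
    fix m assume m: "m \<in> {..<i}"
    hence "ys ! (i-1) \<le> ys ! m" using mono[of m "i-1"] assms by auto
    thus "m \<in> {m. m < n \<and> order_stat_desc n x i \<le> ys ! m}" using m os assms by auto
  qed
  hence "i \<le> card {m. m < n \<and> order_stat_desc n x i \<le> ys ! m}"
    by (metis card_lessThan card_mono finite_Collect_conjI finite_Collect_less_nat)
  thus ?thesis using cnt[of "\<lambda>y. order_stat_desc n x i \<le> y"] by simp
qed

lemma os_mem:
  assumes "1 \<le> i" "i \<le> n"
  shows "\<exists>j\<in>{1..n}. order_stat_desc n x i = x j"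
proof -
  have "rev (sort (map x [1..<Suc n])) ! (i - 1) \<in> set (rev (sort (map x [1..<Suc n])))"
    using assms by (intro nth_mem) simp
  thus ?thesis by (auto simp: order_stat_desc_def)
qed

definition cfg :: "nat set \<Rightarrow> (nat \<Rightarrow> real) \<Rightarrow> nat \<Rightarrow> nat \<Rightarrow> nat set \<Rightarrow> bool" where
  "cfg I x a b S \<longleftrightarrow> x b < x a \<and> (\<forall>j\<in>S. x b < x j \<and> x j \<le> x a) \<and> (\<forall>j\<in>I-{a,b}-S. x j \<le> x b)"

lemma cfg_os:
  assumes i: "2 \<le> i" "i \<le> n" and ab: "a \<in> {1..n}" "b \<in> {1..n}" "a \<noteq> b"
    and S: "S \<subseteq> {1..n} - {a,b}" "card S = i - 2" and c: "cfg {1..n} x a b S"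
  shows "order_stat_desc n x 1 = x a" "order_stat_desc n x i = x b"
proof -
  let ?I = "{1..n}"
  have fS: "finite S" using S(1) finite_subset by blast
  have all_le: "x j \<le> x a" if "j \<in> ?I" for j
  proof -
    have c1: "x b < x a" and c2: "\<And>j. j \<in> S \<Longrightarrow> x j \<le> x a"
      and c3: "\<And>j. j \<in> ?I - {a,b} - S \<Longrightarrow> x j \<le> x b"
      using c unfolding cfg_def by auto
    show ?thesis
    proof (cases "j \<in> S")
      case False
      show ?thesis using c1 c3[of j] that False by (cases "j = a"; cases "j = b") auto
    qed (use c2 in auto)
  qed
  have e1: "{j\<in>?I. x a < x j} = {}" using all_le by force
  have n1: "1 \<le> n" using i by simp
  have "order_stat_desc n x 1 \<le> x a" using os_le_iff[OF _ n1, of x "x a"] e1 by simp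
  moreover have "\<not> order_stat_desc n x 1 < x a"
  proof
    assume lt: "order_stat_desc n x 1 < x a"
    have "a \<in> {j\<in>?I. order_stat_desc n x 1 < x j}" using ab lt by simp
    moreover have "card {j\<in>?I. order_stat_desc n x 1 < x j} < 1"
      using os_le_iff[OF _ n1, of x "order_stat_desc n x 1"] by simp
    ultimately show False by auto
  qed
  ultimately show "order_stat_desc n x 1 = x a" by simp
  have gt: "{j\<in>?I. x b < x j} = insert a S"
  proof -
    have "x b < x j" if "j \<in> S" for j using c that unfolding cfg_def by auto
    moreover have "\<not> x b < x j" if "j \<in> ?I" "j \<notin> insert a S" for j
    proof -
      have c3: "\<And>j. j \<in> ?I - {a,b} - S \<Longrightarrow> x j \<le> x b"
        using c unfolding cfg_def by auto
      show ?thesis using that c3[of j] by (cases "j = b") auto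
    qed
    ultimately show ?thesis using c ab S unfolding cfg_def by auto
  qed
  have aS: "a \<notin> S" "b \<notin> S" using S by auto
  have "card {j\<in>?I. x b < x j} = i - 1" using gt fS aS S i by simp
  hence "order_stat_desc n x i \<le> x b" using os_le_iff[of i n x "x b"] i by simp
  moreover have "\<not> order_stat_desc n x i < x b"
  proof
    assume lt: "order_stat_desc n x i < x b"
    have "insert b (insert a S) \<subseteq> {j\<in>?I. order_stat_desc n x i < x j}"
    proof -
      have "x b < x a" "\<And>j. j \<in> S \<Longrightarrow> x b < x j" using c unfolding cfg_def by auto
      thus ?thesis using lt ab S(1) by fastforce
    qed
    hence "card (insert b (insert a S)) \<le> card {j\<in>?I. order_stat_desc n x i < x j}"
      by (intro card_mono) auto
    moreover have "card (insert b (insert a S)) = i" using fS aS ab S i by simp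
    ultimately show False using os_le_iff[of i n x "order_stat_desc n x i"] i by simp
  qed
  ultimately show "order_stat_desc n x i = x b" by simp
qed

lemma cfg_exists:
  assumes i: "2 \<le> i" "i \<le> n" and inj: "inj_on x {1..n}"
  obtains a b S where "a \<in> {1..n}" "b \<in> {1..n}" "a \<noteq> b" "S \<subseteq> {1..n} - {a,b}" "card S = i - 2"
    "cfg {1..n} x a b S"
proof -
  let ?I = "{1..n}"
  have n1: "1 \<le> n" using i by simp
  obtain a where a: "a \<in> ?I" "order_stat_desc n x 1 = x a" using os_mem[OF _ n1] by blast
  obtain b where b: "b \<in> ?I" "order_stat_desc n x i = x b" using os_mem[of i n x] i by auto
  have all_le: "x j \<le> x a" if "j \<in> ?I" for j
  proof (rule ccontr)
    assume "\<not> x j \<le> x a"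
    hence "j \<in> {j\<in>?I. x a < x j}" using that by auto
    moreover have "card {j\<in>?I. x a < x j} < 1"
      using os_le_iff[OF _ n1, of x "x a"] a by simp
    ultimately show False by auto
  qed
  have lt_i: "card {j\<in>?I. x b < x j} < i" using os_le_iff[of i n x "x b"] i b by simp
  have ge_i: "i \<le> card {j\<in>?I. x b \<le> x j}" using os_ge_card[of i n x] i b by simp
  have ins: "{j\<in>?I. x b \<le> x j} = insert b {j\<in>?I. x b < x j}"
  proof (intro equalityI subsetI)
    fix j assume j: "j \<in> {j\<in>?I. x b \<le> x j}"
    show "j \<in> insert b {j\<in>?I. x b < x j}"
    proof (cases "j = b")
      case False
      have jI: "j \<in> ?I" and le: "x b \<le> x j" using j by simp_all
      have "x j \<noteq> x b" using inj_onD[OF inj _ jI b(1)] False by blast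
      hence "x b < x j" using le by simp
      thus ?thesis using jI by simp
    qed simp
  qed (use b in auto)
  have cnt: "card {j\<in>?I. x b < x j} = i - 1" using lt_i ge_i ins by simp
  have "{j\<in>?I. x b < x j} \<noteq> {}"
  proof
    assume e: "{j\<in>?I. x b < x j} = {}"
    have "card {j\<in>?I. x b < x j} = 0" by (simp only: e card.empty)
    thus False using cnt i by linarith
  qed
  then obtain j where j: "j \<in> ?I" "x b < x j" by auto
  have ba: "x b < x a" using all_le[OF j(1)] j by simp
  hence ab: "a \<noteq> b" by auto
  define S where "S = {j\<in>?I. x b < x j} - {a}"
  have aset: "a \<in> {j\<in>?I. x b < x j}" using a ba by simp
  have "card S = i - 2" unfolding S_def using cnt aset by (simp add: card_Diff_singleton)
  moreover have "S \<subseteq> ?I - {a,b}" unfolding S_def by auto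
  moreover have "cfg ?I x a b S" unfolding cfg_def S_def using ba all_le by auto
  ultimately show ?thesis using that a b ab by blast
qed

lemma cfg_sum:
  fixes h :: "real \<Rightarrow> 'b::comm_monoid_add"
  assumes i: "2 \<le> i" "i \<le> n" and inj: "inj_on x {1..n}"
  shows "(\<Sum>a\<in>{1..n}. \<Sum>b\<in>{1..n}-{a}. \<Sum>S\<in>{S. S \<subseteq> {1..n}-{a,b} \<and> card S = i - 2}.
            (if cfg {1..n} x a b S then h (x a - x b) else 0)) = h (gap_stat n x i)"
proof -
  let ?I = "{1..n}"
  obtain a0 b0 S0 where o: "a0 \<in> ?I" "b0 \<in> ?I" "a0 \<noteq> b0" "S0 \<subseteq> ?I - {a0,b0}" "card S0 = i - 2"
    "cfg ?I x a0 b0 S0" using cfg_exists[OF i inj] by blast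
  have g0: "gap_stat n x i = x a0 - x b0" using cfg_os[OF i o] by (simp add: gap_stat_def)
  have uniq: "(if cfg ?I x a b S then h (x a - x b) else 0) =
      (if a = a0 then if b = b0 then if S = S0 then h (gap_stat n x i) else 0 else 0 else 0)"
    if "a \<in> ?I" "b \<in> ?I - {a}" "S \<in> {S. S \<subseteq> ?I-{a,b} \<and> card S = i - 2}" for a b S
  proof (cases "cfg ?I x a b S")
    case True
    have "order_stat_desc n x 1 = x a" "order_stat_desc n x i = x b"
      using cfg_os[OF i, of a b S x] that True by auto
    moreover have "order_stat_desc n x 1 = x a0" "order_stat_desc n x i = x b0"
      using cfg_os[OF i o] by auto
    ultimately have xa: "x a = x a0" and xb: "x b = x b0" by simp_all
    have aI: "a \<in> ?I" and bI: "b \<in> ?I" using that by auto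
    have "a = a0" using inj_onD[OF inj xa aI o(1)] .
    moreover have "b = b0" using inj_onD[OF inj xb bI o(2)] .
    moreover have "S = S0"
    proof -
      have Ssub: "S \<subseteq> ?I - {a,b}" using that by simp
      have "S = {j \<in> ?I - {a,b}. x b < x j}"
      proof (intro equalityI subsetI)
        fix j assume "j \<in> S" thus "j \<in> {j \<in> ?I - {a,b}. x b < x j}"
          using True Ssub unfolding cfg_def by blast
      next
        fix j assume j: "j \<in> {j \<in> ?I - {a,b}. x b < x j}"
        show "j \<in> S"
        proof (rule ccontr)
          assume "j \<notin> S"
          hence "x j \<le> x b" using True j unfolding cfg_def by blast
          thus False using j by simp
        qed
      qed
      moreover have "S0 = {j \<in> ?I - {a0,b0}. x b0 < x j}"
      proof (intro equalityI subsetI)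
        fix j assume "j \<in> S0" thus "j \<in> {j \<in> ?I - {a0,b0}. x b0 < x j}"
          using o(4,6) unfolding cfg_def by blast
      next
        fix j assume j: "j \<in> {j \<in> ?I - {a0,b0}. x b0 < x j}"
        show "j \<in> S0"
        proof (rule ccontr)
          assume "j \<notin> S0"
          hence "x j \<le> x b0" using o(6) j unfolding cfg_def by blast
          thus False using j by simp
        qed
      qed
      ultimately show ?thesis using \<open>a = a0\<close> \<open>b = b0\<close> by simp
    qed
    ultimately show ?thesis using True g0 by simp
  next
    case False
    have "\<not> (a = a0 \<and> b = b0 \<and> S = S0)" using False o(6) by blast
    thus ?thesis using False by auto
  qed
  have "(\<Sum>a\<in>?I. \<Sum>b\<in>?I-{a}. \<Sum>S\<in>{S. S \<subseteq> ?I-{a,b} \<and> card S = i - 2}.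
            (if cfg ?I x a b S then h (x a - x b) else 0)) =
        (\<Sum>a\<in>?I. \<Sum>b\<in>?I-{a}. \<Sum>S\<in>{S. S \<subseteq> ?I-{a,b} \<and> card S = i - 2}.
            (if a = a0 then if b = b0 then if S = S0 then h (gap_stat n x i) else 0 else 0 else 0))"
    by (intro sum.cong refl, rule uniq) auto
  also have "\<dots> = (\<Sum>a\<in>?I. if a = a0 then (\<Sum>b\<in>?I-{a}. if b = b0 then
       (\<Sum>S\<in>{S. S \<subseteq> ?I-{a,b} \<and> card S = i - 2}. if S = S0 then h (gap_stat n x i) else 0) else 0) else 0)"
  proof (intro sum.cong refl)
    fix a assume "a \<in> ?I"
    show "(\<Sum>b\<in>?I-{a}. \<Sum>S\<in>{S. S \<subseteq> ?I-{a,b} \<and> card S = i - 2}.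
            (if a = a0 then if b = b0 then if S = S0 then h (gap_stat n x i) else 0 else 0 else 0)) =
          (if a = a0 then (\<Sum>b\<in>?I-{a}. if b = b0 then
       (\<Sum>S\<in>{S. S \<subseteq> ?I-{a,b} \<and> card S = i - 2}. if S = S0 then h (gap_stat n x i) else 0) else 0) else 0)"
    proof (cases "a = a0")
      case True
      show ?thesis unfolding True if_True simp_thms(6)
        by (intro sum.cong refl) simp
    qed simp
  qed
  also have "\<dots> = h (gap_stat n x i)"
    using o by (simp add: sum.delta')
  finally show ?thesis .
qed



lemma card_as_sum: "finite I \<Longrightarrow> real (card {j\<in>I. P j}) = (\<Sum>j\<in>I. if P j then 1 else 0)"
  by (simp add: sum.inter_filter[symmetric])

lemma os_meas:
  assumes "1 \<le> i" "i \<le> n" and [measurable_cong]: "sets M = sets borel"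
  shows "(\<lambda>x. order_stat_desc n x i) \<in> borel_measurable (PiM {1..n} (\<lambda>_. M))"
proof (subst borel_measurable_iff_le, intro allI)
  fix t
  have "{x \<in> space (PiM {1..n} (\<lambda>_. M)). order_stat_desc n x i \<le> t} =
        {x \<in> space (PiM {1..n} (\<lambda>_. M)). (\<Sum>j\<in>{1..n}. if t < x j then 1 else 0) < real i}"
  proof (intro Collect_cong conj_cong refl)
    fix x :: "nat \<Rightarrow> real"
    have "real (card {j\<in>{1..n}. t < x j}) = (\<Sum>j\<in>{1..n}. if t < x j then 1 else 0)"
      by (rule card_as_sum) simp
    thus "(order_stat_desc n x i \<le> t) = ((\<Sum>j\<in>{1..n}. if t < x j then 1 else 0) < real i)"
      using os_le_iff[OF assms(1,2), of x t] by (metis of_nat_less_iff)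
  qed
  also have "\<dots> \<in> sets (PiM {1..n} (\<lambda>_. M))"
    by measurable
  finally show "{x \<in> space (PiM {1..n} (\<lambda>_. M)). order_stat_desc n x i \<le> t} \<in> sets (PiM {1..n} (\<lambda>_. M))" .
qed

lemma gap_meas[measurable]:
  assumes "2 \<le> i" "i \<le> n" and [measurable_cong]: "sets M = sets borel"
  shows "(\<lambda>x. gap_stat n x i) \<in> borel_measurable (PiM {1..n} (\<lambda>_. M))"
proof -
  have [measurable]: "(\<lambda>x. order_stat_desc n x i) \<in> borel_measurable (PiM {1..n} (\<lambda>_. M))"
    "(\<lambda>x. order_stat_desc n x 1) \<in> borel_measurable (PiM {1..n} (\<lambda>_. M))"
    using assms os_meas[OF _ _ assms(3)] by auto
  show ?thesis unfolding gap_stat_def by measurable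
qed

lemma gap_cong: "(\<And>j. j \<in> {1..n} \<Longrightarrow> x j = y j) \<Longrightarrow> gap_stat n x i = gap_stat n y i"
proof -
  assume a: "\<And>j. j \<in> {1..n} \<Longrightarrow> x j = y j"
  have "map x [1..<Suc n] = map y [1..<Suc n]" by (rule map_cong[OF refl]) (use a in force)
  thus ?thesis unfolding gap_stat_def order_stat_desc_def by (simp only:)
qed

lemma measurable_Pair3_compose_split[measurable_dest]:
  assumes f: "(\<lambda>(u,v,t). f u v t) \<in> measurable (M1 \<Otimes>\<^sub>M M2 \<Otimes>\<^sub>M M3) N"
  assumes g: "g \<in> measurable M M1" and h: "h \<in> measurable M M2" and k: "k \<in> measurable M M3"
  shows "(\<lambda>x. f (g x) (h x) (k x)) \<in> measurable M N"
  using measurable_compose[OF measurable_Pair[OF g measurable_Pair[OF h k]] f] by simp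

definition phiS :: "nat set \<Rightarrow> nat \<Rightarrow> real \<Rightarrow> real \<Rightarrow> real \<Rightarrow> ennreal" where
  "phiS S j u v t = (if (if j \<in> S then v < t \<and> t \<le> u else t \<le> v) then 1 else 0)"

lemma phiS_meas[measurable]: "(\<lambda>(u,v,t). phiS S j u v t) \<in> borel_measurable (borel \<Otimes>\<^sub>M borel \<Otimes>\<^sub>M borel)"
  by (cases "j \<in> S") (simp_all add: phiS_def)

lemma prod01: "finite J \<Longrightarrow> (\<Prod>j\<in>J. (if P j then 1 else 0 :: ennreal)) = (if \<forall>j\<in>J. P j then 1 else 0)"
  by (cases "\<forall>j\<in>J. P j") (auto intro: prod_zero)

lemma T_cfg:
  fixes h :: "real \<Rightarrow> ennreal"
  assumes "S \<subseteq> I - {a,b}" "finite I"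
  shows "(if x b < x a then h (x a - x b) else 0) * (\<Prod>j\<in>I-{a,b}. phiS S j (x a) (x b) (x j))
         = (if cfg I x a b S then h (x a - x b) else 0)"
proof -
  have "(\<Prod>j\<in>I-{a,b}. phiS S j (x a) (x b) (x j)) =
     (if \<forall>j\<in>I-{a,b}. (if j \<in> S then x b < x j \<and> x j \<le> x a else x j \<le> x b) then 1 else 0)"
    unfolding phiS_def using assms by (intro prod01) auto
  moreover have "cfg I x a b S \<longleftrightarrow> x b < x a \<and> (\<forall>j\<in>I-{a,b}. (if j \<in> S then x b < x j \<and> x j \<le> x a else x j \<le> x b))"
    unfolding cfg_def using assms(1) by auto
  ultimately show ?thesis by auto
qed

locale gm =
  fixes g :: "real \<Rightarrow> real" and G :: "real \<Rightarrow> real"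
  assumes g_nonneg: "\<And>x. 0 \<le> g x" and g_meas[measurable]: "g \<in> borel_measurable borel"
   and g_supp: "\<And>x. x \<notin> {0..1} \<Longrightarrow> g x = 0"
   and G_def: "\<And>z. G z = (\<integral>x\<in>{0..z}. g x \<partial>lborel)"
   and prob: "prob_space (density lborel (\<lambda>x. ennreal (g x)))"
begin

abbreviation "Gam \<equiv> density lborel (\<lambda>x. ennreal (g x))"
end

sublocale gm \<subseteq> P: prob_space Gam by (rule prob)

context gm begin

lemma sets_Gam[measurable_cong]: "sets Gam = sets borel" by simp
lemma space_Gam[simp]: "space Gam = UNIV" by simp

lemma int_g: "(\<integral>\<^sup>+x. ennreal (g x) \<partial>lborel) = 1"
proof -
  have "emeasure Gam UNIV = 1" using prob_space.emeasure_space_1[OF prob] by simp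
  thus ?thesis by (simp add: emeasure_density)
qed

lemma integrable_g: "integrable lborel g"
  using int_g g_nonneg by (intro integrableI_nonneg) auto

lemma G_eq: "ennreal (G z) = emeasure Gam {..z}" and G_nonneg: "0 \<le> G z"
proof -
  have int: "integrable lborel (\<lambda>x. indicator {0..z} x *\<^sub>R g x)"
    by (intro integrable_mult_indicator integrable_g) auto
  have "G z = (\<integral>x. indicator {0..z} x *\<^sub>R g x \<partial>lborel)"
    by (simp add: G_def set_lebesgue_integral_def)
  hence "ennreal (G z) = (\<integral>\<^sup>+x. ennreal (indicator {0..z} x *\<^sub>R g x) \<partial>lborel)"
    using nn_integral_eq_integral[OF int] g_nonneg by (simp add: indicator_def)
  also have "\<dots> = (\<integral>\<^sup>+x. ennreal (g x) * indicator {..z} x \<partial>lborel)"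
  proof (intro nn_integral_cong)
    fix x :: real
    show "ennreal (indicator {0..z} x *\<^sub>R g x) = ennreal (g x) * indicator {..z} x"
      using g_supp[of x] by (cases "x < 0") (auto simp: indicator_def)
  qed
  also have "\<dots> = emeasure Gam {..z}" by (simp add: emeasure_density)
  finally show "ennreal (G z) = emeasure Gam {..z}" .
  show "0 \<le> G z" unfolding G_def set_lebesgue_integral_def
    by (intro Bochner_Integration.integral_nonneg) (simp add: g_nonneg)
qed

lemma G_measure: "G z = measure Gam {..z}"
proof -
  have "ennreal (G z) = ennreal (measure Gam {..z})" using G_eq[of z] P.emeasure_eq_measure by simp
  thus ?thesis using G_nonneg[of z] by simp
qed

lemma G_diff: assumes "v \<le> u" shows "ennreal (G u - G v) = emeasure Gam {v<..u}"
proof -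
  have "{v<..u} = {..u} - {..v}" by auto
  hence "measure Gam {v<..u} = measure Gam {..u} - measure Gam {..v}"
    using assms by (simp add: P.finite_measure_Diff)
  thus ?thesis using P.emeasure_eq_measure by (simp add: G_measure)
qed

lemma G_mono: "v \<le> u \<Longrightarrow> G v \<le> G u"
  unfolding G_measure by (intro P.finite_measure_mono) auto

lemma G_meas[measurable]: "G \<in> borel_measurable borel"
  by (intro borel_measurable_mono monoI G_mono) 


lemma psf: "product_sigma_finite (\<lambda>_::nat. Gam)"
  unfolding product_sigma_finite_def using P.sigma_finite_measure_axioms by simp

lemma TC:
  fixes F :: "real \<Rightarrow> real \<Rightarrow> ennreal" and \<phi> :: "nat \<Rightarrow> real \<Rightarrow> real \<Rightarrow> real \<Rightarrow> ennreal"
  assumes J: "finite J" "a \<notin> J" "b \<notin> J" "a \<noteq> b"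
  and Fm[measurable]: "(\<lambda>(u,v). F u v) \<in> borel_measurable (borel \<Otimes>\<^sub>M borel)"
  and \<phi>m[measurable]: "\<And>j. (\<lambda>(u,v,t). \<phi> j u v t) \<in> borel_measurable (borel \<Otimes>\<^sub>M borel \<Otimes>\<^sub>M borel)"
  shows "(\<integral>\<^sup>+x. F (x a) (x b) * (\<Prod>j\<in>J. \<phi> j (x a) (x b) (x j)) \<partial>PiM (insert a (insert b J)) (\<lambda>_. Gam))
        = (\<integral>\<^sup>+v. \<integral>\<^sup>+u. F u v * (\<Prod>j\<in>J. \<integral>\<^sup>+t. \<phi> j u v t \<partial>Gam) \<partial>Gam \<partial>Gam)"
proof -
  interpret PS: product_sigma_finite "\<lambda>_::nat. Gam" by (rule psf)
  have K: "insert a (insert b J) = {a,b} \<union> J" by auto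
  have dis: "{a,b} \<inter> J = {}" using J by auto
  define \<Psi> where "\<Psi> u v = F u v * (\<Prod>j\<in>J. \<integral>\<^sup>+t. \<phi> j u v t \<partial>Gam)" for u v
  have \<Psi>m[measurable]: "(\<lambda>(u,v). \<Psi> u v) \<in> borel_measurable (borel \<Otimes>\<^sub>M borel)"
    unfolding \<Psi>_def by measurable
  have "(\<integral>\<^sup>+x. F (x a) (x b) * (\<Prod>j\<in>J. \<phi> j (x a) (x b) (x j)) \<partial>PiM (insert a (insert b J)) (\<lambda>_. Gam))
     = (\<integral>\<^sup>+x. (\<integral>\<^sup>+y. (\<lambda>x. F (x a) (x b) * (\<Prod>j\<in>J. \<phi> j (x a) (x b) (x j))) (merge {a,b} J (x, y))
          \<partial>PiM J (\<lambda>_. Gam)) \<partial>PiM {a,b} (\<lambda>_. Gam))"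
    unfolding K by (rule PS.product_nn_integral_fold) (use dis J in auto)
  also have "\<dots> = (\<integral>\<^sup>+x. \<Psi> (x a) (x b) \<partial>PiM {a,b} (\<lambda>_. Gam))"
  proof (intro nn_integral_cong)
    fix x assume x: "x \<in> space (PiM {a,b} (\<lambda>_. Gam))"
    have "(\<integral>\<^sup>+y. (\<lambda>x. F (x a) (x b) * (\<Prod>j\<in>J. \<phi> j (x a) (x b) (x j))) (merge {a,b} J (x, y))
          \<partial>PiM J (\<lambda>_. Gam)) = (\<integral>\<^sup>+y. F (x a) (x b) * (\<Prod>j\<in>J. \<phi> j (x a) (x b) (y j)) \<partial>PiM J (\<lambda>_. Gam))"
      using J by (intro nn_integral_cong prod.cong refl arg_cong2[where f="(*)"]) (auto simp: merge_def)
    also have "\<dots> = F (x a) (x b) * (\<integral>\<^sup>+y. (\<Prod>j\<in>J. \<phi> j (x a) (x b) (y j)) \<partial>PiM J (\<lambda>_. Gam))"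
      by (intro nn_integral_cmult) measurable
    also have "\<dots> = \<Psi> (x a) (x b)"
      unfolding \<Psi>_def by (subst PS.product_nn_integral_prod) (use J in auto)
    finally show "(\<integral>\<^sup>+y. (\<lambda>x. F (x a) (x b) * (\<Prod>j\<in>J. \<phi> j (x a) (x b) (x j))) (merge {a,b} J (x, y))
          \<partial>PiM J (\<lambda>_. Gam)) = \<Psi> (x a) (x b)" .
  qed
  also have "\<dots> = (\<integral>\<^sup>+x. (\<integral>\<^sup>+y. \<Psi> ((x(a := y)) a) ((x(a := y)) b) \<partial>Gam) \<partial>PiM {b} (\<lambda>_. Gam))"
    by (rule PS.product_nn_integral_insert) (use J in auto)
  also have "\<dots> = (\<integral>\<^sup>+x. (\<lambda>v. \<integral>\<^sup>+y. \<Psi> y v \<partial>Gam) (x b) \<partial>PiM {b} (\<lambda>_. Gam))"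
    using J by simp
  also have "\<dots> = (\<integral>\<^sup>+v. \<integral>\<^sup>+u. \<Psi> u v \<partial>Gam \<partial>Gam)"
    by (rule PS.product_nn_integral_singleton) measurable
  finally show ?thesis unfolding \<Psi>_def .
qed


lemma Gam_UNIV[simp]: "emeasure Gam UNIV = 1"
  using P.emeasure_space_1 by simp

lemma emeasure_Gam_singleton: "emeasure Gam {v} = 0"
proof -
  have "emeasure Gam {v} = (\<integral>\<^sup>+x. ennreal (g x) * indicator {v} x \<partial>lborel)"
    by (rule emeasure_density) auto
  also have "\<dots> = (\<integral>\<^sup>+(x::real). 0 \<partial>lborel)"
  proof (rule nn_integral_cong_AE)
    show "AE x in lborel. ennreal (g x) * indicator {v} x = 0"
      using AE_lborel_singleton[of v] by eventually_elim auto
  qed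
  finally show ?thesis by simp
qed

lemma ties_null:
  fixes n :: nat
  assumes ab: "a \<in> {1..n}" "b \<in> {1..n}" "a \<noteq> b"
  shows "AE x in PiM {1..n} (\<lambda>_. Gam). x a \<noteq> x b"
proof -
  let ?P = "PiM {1..n} (\<lambda>_. Gam)"
  let ?J = "{1..n} - {a,b}"
  have K: "insert a (insert b ?J) = {1..n}" using ab by auto
  have "(\<integral>\<^sup>+x. indicator {x \<in> space ?P. x a = x b} x \<partial>?P)
      = (\<integral>\<^sup>+x. (\<lambda>u v. if u = v then 1 else 0) (x a) (x b) * (\<Prod>j\<in>?J. (\<lambda>j u v t. 1) j (x a) (x b) (x j)) \<partial>?P)"
    by (intro nn_integral_cong) (auto simp: indicator_def)
  also have "\<dots> = (\<integral>\<^sup>+v. \<integral>\<^sup>+u. (if u = v then 1 else 0) * (\<Prod>j\<in>?J. \<integral>\<^sup>+t. 1 \<partial>Gam) \<partial>Gam \<partial>Gam)"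
  proof -
    have "(\<integral>\<^sup>+x. (\<lambda>u v. if u = v then 1 else 0) (x a) (x b) * (\<Prod>j\<in>?J. (\<lambda>j u v t. 1) j (x a) (x b) (x j)) \<partial>PiM (insert a (insert b ?J)) (\<lambda>_. Gam))
      = (\<integral>\<^sup>+v. \<integral>\<^sup>+u. (if u = v then 1 else 0) * (\<Prod>j\<in>?J. \<integral>\<^sup>+t. 1 \<partial>Gam) \<partial>Gam \<partial>Gam)"
      by (rule TC) (use ab in auto)
    thus ?thesis by (simp only: K)
  qed
  also have "\<dots> = (\<integral>\<^sup>+v. emeasure Gam {v} \<partial>Gam)"
  proof (intro nn_integral_cong)
    fix v :: real
    have p1: "(\<Prod>j\<in>?J. \<integral>\<^sup>+t. 1 \<partial>Gam) = 1" by (simp add: P.emeasure_space_1)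
    have "(\<integral>\<^sup>+u. (if u = v then 1 else 0) * 1 \<partial>Gam) = (\<integral>\<^sup>+u. indicator {v} u \<partial>Gam)"
      by (intro nn_integral_cong) (auto simp: indicator_def)
    thus "(\<integral>\<^sup>+u. (if u = v then 1 else 0) * (\<Prod>j\<in>?J. \<integral>\<^sup>+t. 1 \<partial>Gam) \<partial>Gam) = emeasure Gam {v}"
      unfolding p1 by simp
  qed
  also have "\<dots> = 0" by (simp add: emeasure_Gam_singleton)
  finally have i0: "(\<integral>\<^sup>+x. indicator {x \<in> space ?P. x a = x b} x \<partial>?P) = 0" .
  have Nm: "{x \<in> space ?P. x a = x b} \<in> sets ?P" using ab by measurable
  have "emeasure ?P {x \<in> space ?P. x a = x b} = 0"
    using i0 nn_integral_indicator[OF Nm] by simp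
  thus ?thesis
    by (intro AE_I'[of "{x \<in> space ?P. x a = x b}"]) (use Nm in auto)
qed

lemma AE_inj: "AE x in PiM {1..(n::nat)} (\<lambda>_. Gam). inj_on x {1..n}"
proof -
  have "AE x in PiM {1..n} (\<lambda>_. Gam). \<forall>a\<in>{1..n}. \<forall>b\<in>{1..n}. a \<noteq> b \<longrightarrow> x a \<noteq> x b"
    by (intro AE_finite_allI) (auto intro: ties_null)
  thus ?thesis by eventually_elim (auto simp: inj_on_def)
qed


lemma int_phiS:
  assumes "v < u"
  shows "(\<integral>\<^sup>+t. phiS S j u v t \<partial>Gam) = (if j \<in> S then ennreal (G u - G v) else ennreal (G v))"
proof (cases "j \<in> S")
  case True
  have "(\<integral>\<^sup>+t. phiS S j u v t \<partial>Gam) = (\<integral>\<^sup>+t. indicator {v<..u} t \<partial>Gam)"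
    using True by (intro nn_integral_cong) (auto simp: phiS_def indicator_def)
  also have "\<dots> = ennreal (G u - G v)" using G_diff[of v u] assms by simp
  finally show ?thesis using True by simp
next
  case False
  have "(\<integral>\<^sup>+t. phiS S j u v t \<partial>Gam) = (\<integral>\<^sup>+t. indicator {..v} t \<partial>Gam)"
    using False by (intro nn_integral_cong) (auto simp: phiS_def indicator_def)
  also have "\<dots> = ennreal (G v)" using G_eq[of v] by simp
  finally show ?thesis using False by simp
qed

lemma prod_phiS:
  assumes "finite J" "S \<subseteq> J" "v < u"
  shows "(\<Prod>j\<in>J. \<integral>\<^sup>+t. phiS S j u v t \<partial>Gam) = ennreal ((G u - G v) ^ card S * G v ^ (card J - card S))"
proof -
  have fS: "finite S" using assms finite_subset by blast
  have "(\<Prod>j\<in>J. \<integral>\<^sup>+t. phiS S j u v t \<partial>Gam) = (\<Prod>j\<in>J. if j \<in> S then ennreal (G u - G v) else ennreal (G v))"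
    using assms by (intro prod.cong refl int_phiS)
  also have "\<dots> = (\<Prod>j\<in>J \<inter> {j. j \<in> S}. ennreal (G u - G v)) * (\<Prod>j\<in>J \<inter> - {j. j \<in> S}. ennreal (G v))"
    by (rule prod.If_cases) (rule assms)
  also have "J \<inter> {j. j \<in> S} = S" using assms by auto
  also have "J \<inter> - {j. j \<in> S} = J - S" by auto
  also have "card (J - S) = card J - card S" using assms fS by (simp add: card_Diff_subset)
  hence "(\<Prod>j\<in>S. ennreal (G u - G v)) * (\<Prod>j\<in>J - S. ennreal (G v)) = ennreal (G u - G v) ^ card S * ennreal (G v) ^ (card J - card S)"
    by simp
  also have "\<dots> = ennreal ((G u - G v) ^ card S * G v ^ (card J - card S))"
    using G_mono[of v u] assms G_nonneg[of v] by (simp add: ennreal_mult' ennreal_power)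
  finally show ?thesis .
qed

definition Qf :: "(real \<Rightarrow> ennreal) \<Rightarrow> nat \<Rightarrow> nat \<Rightarrow> ennreal" where
  "Qf h n i = (\<integral>\<^sup>+v. \<integral>\<^sup>+u. (if v < u then h (u - v) else 0) * ennreal ((G u - G v)^(i-2) * G v^(n-i)) \<partial>Gam \<partial>Gam)"

lemma term_int:
  fixes n i :: nat and h :: "real \<Rightarrow> ennreal"
  assumes i: "2 \<le> i" "i \<le> n" and hm[measurable]: "h \<in> borel_measurable borel"
    and ab: "a \<in> {1..n}" "b \<in> {1..n}" "a \<noteq> b" and S: "S \<subseteq> {1..n} - {a,b}" "card S = i - 2"
  shows "(\<integral>\<^sup>+x. (if x b < x a then h (x a - x b) else 0) * (\<Prod>j\<in>{1..n}-{a,b}. phiS S j (x a) (x b) (x j))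
            \<partial>PiM {1..n} (\<lambda>_. Gam)) = Qf h n i"
proof -
  let ?J = "{1..n} - {a,b}"
  have K: "insert a (insert b ?J) = {1..n}" using ab by auto
  have "(\<integral>\<^sup>+x. (\<lambda>u v. if v < u then h (u - v) else 0) (x a) (x b) * (\<Prod>j\<in>?J. phiS S j (x a) (x b) (x j))
            \<partial>PiM (insert a (insert b ?J)) (\<lambda>_. Gam)) =
     (\<integral>\<^sup>+v. \<integral>\<^sup>+u. (if v < u then h (u - v) else 0) * (\<Prod>j\<in>?J. \<integral>\<^sup>+t. phiS S j u v t \<partial>Gam) \<partial>Gam \<partial>Gam)"
    by (rule TC) (use ab in auto)
  hence "(\<integral>\<^sup>+x. (if x b < x a then h (x a - x b) else 0) * (\<Prod>j\<in>?J. phiS S j (x a) (x b) (x j))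
            \<partial>PiM {1..n} (\<lambda>_. Gam)) =
     (\<integral>\<^sup>+v. \<integral>\<^sup>+u. (if v < u then h (u - v) else 0) * (\<Prod>j\<in>?J. \<integral>\<^sup>+t. phiS S j u v t \<partial>Gam) \<partial>Gam \<partial>Gam)"
    by (simp only: K)
  also have "\<dots> = Qf h n i" unfolding Qf_def
  proof (intro nn_integral_cong)
    fix u v :: real
    show "(if v < u then h (u - v) else 0) * (\<Prod>j\<in>?J. \<integral>\<^sup>+t. phiS S j u v t \<partial>Gam) =
          (if v < u then h (u - v) else 0) * ennreal ((G u - G v)^(i-2) * G v^(n-i))"
    proof (cases "v < u")
      case True
      have cJ: "card ?J = n - 2" using ab by (simp add: card_Diff_subset)
      have "(\<Prod>j\<in>?J. \<integral>\<^sup>+t. phiS S j u v t \<partial>Gam) = ennreal ((G u - G v)^(i-2) * G v^(n-i))"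
      proof -
        have e: "n - 2 - (i - 2) = n - i" using i by simp
        show ?thesis using prod_phiS[of ?J S v u] True S by (simp only: cJ S(2) e finite_Diff finite_atLeastAtMost)
      qed
      thus ?thesis by simp
    qed simp
  qed
  finally show ?thesis .
qed


lemma core:
  fixes n i :: nat and h :: "real \<Rightarrow> ennreal"
  assumes i: "2 \<le> i" "i \<le> n" and hm[measurable]: "h \<in> borel_measurable borel"
  shows "(\<integral>\<^sup>+x. h (gap_stat n x i) \<partial>PiM {1..n} (\<lambda>_. Gam)) = of_nat (n * (n - 1) * ((n - 2) choose (i - 2))) * Qf h n i"
proof -
  let ?I = "{1..n}"
  let ?P = "PiM ?I (\<lambda>_. Gam)"
  define Sset where "Sset a b = {S. S \<subseteq> ?I - {a,b} \<and> card S = i - 2}" for a b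
  define T where "T a b S x = (if x b < x a then h (x a - x b) else 0) * (\<Prod>j\<in>?I-{a,b}. phiS S j (x a) (x b) (x j))" for a b S x
  have Tm[measurable]: "T a b S \<in> borel_measurable ?P" if "a \<in> ?I" "b \<in> ?I" for a b S
    unfolding T_def using that by measurable
  have "(\<integral>\<^sup>+x. h (gap_stat n x i) \<partial>?P) = (\<integral>\<^sup>+x. (\<Sum>a\<in>?I. \<Sum>b\<in>?I-{a}. \<Sum>S\<in>Sset a b. T a b S x) \<partial>?P)"
  proof (intro nn_integral_cong_AE)
    show "AE x in ?P. h (gap_stat n x i) = (\<Sum>a\<in>?I. \<Sum>b\<in>?I-{a}. \<Sum>S\<in>Sset a b. T a b S x)"
      using AE_inj[of n]
    proof eventually_elim
      case (elim x)
      have "(\<Sum>a\<in>?I. \<Sum>b\<in>?I-{a}. \<Sum>S\<in>Sset a b. T a b S x) =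
        (\<Sum>a\<in>?I. \<Sum>b\<in>?I-{a}. \<Sum>S\<in>{S. S \<subseteq> ?I-{a,b} \<and> card S = i - 2}.
            (if cfg ?I x a b S then h (x a - x b) else 0))"
        unfolding Sset_def T_def by (intro sum.cong refl T_cfg) auto
      also have "\<dots> = h (gap_stat n x i)" by (rule cfg_sum[OF i elim])
      finally show ?case by simp
    qed
  qed
  also have "\<dots> = (\<Sum>a\<in>?I. \<Sum>b\<in>?I-{a}. \<Sum>S\<in>Sset a b. \<integral>\<^sup>+x. T a b S x \<partial>?P)"
  proof -
    have "(\<integral>\<^sup>+x. (\<Sum>a\<in>?I. \<Sum>b\<in>?I-{a}. \<Sum>S\<in>Sset a b. T a b S x) \<partial>?P) =
        (\<Sum>a\<in>?I. \<integral>\<^sup>+x. (\<Sum>b\<in>?I-{a}. \<Sum>S\<in>Sset a b. T a b S x) \<partial>?P)"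
      by (intro nn_integral_sum) measurable
    also have "\<dots> = (\<Sum>a\<in>?I. \<Sum>b\<in>?I-{a}. \<integral>\<^sup>+x. (\<Sum>S\<in>Sset a b. T a b S x) \<partial>?P)"
      by (intro sum.cong refl nn_integral_sum) measurable
    also have "\<dots> = (\<Sum>a\<in>?I. \<Sum>b\<in>?I-{a}. \<Sum>S\<in>Sset a b. \<integral>\<^sup>+x. T a b S x \<partial>?P)"
      by (intro sum.cong refl nn_integral_sum) measurable
    finally show ?thesis .
  qed
  also have "\<dots> = (\<Sum>a\<in>?I. \<Sum>b\<in>?I-{a}. \<Sum>S\<in>Sset a b. Qf h n i)"
    unfolding T_def Sset_def by (intro sum.cong refl term_int i hm) auto
  also have "\<dots> = (\<Sum>a\<in>?I. \<Sum>b\<in>?I-{a}. of_nat ((n - 2) choose (i - 2)) * Qf h n i)"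
  proof (intro sum.cong refl)
    fix a b assume ab: "a \<in> ?I" "b \<in> ?I - {a}"
    have "card (Sset a b) = card (?I - {a,b}) choose (i - 2)"
      unfolding Sset_def by (rule n_subsets) simp
    also have "card (?I - {a,b}) = n - 2" using ab by (simp add: card_Diff_subset)
    finally show "(\<Sum>S\<in>Sset a b. Qf h n i) = of_nat ((n - 2) choose (i - 2)) * Qf h n i" by simp
  qed
  also have "\<dots> = of_nat (n * (n - 1) * ((n - 2) choose (i - 2))) * Qf h n i"
  proof -
    have "\<And>a. a \<in> ?I \<Longrightarrow> card (?I - {a}) = n - 1" by simp
    hence "(\<Sum>a\<in>?I. \<Sum>b\<in>?I-{a}. of_nat ((n - 2) choose (i - 2)) * Qf h n i) =
          (\<Sum>a\<in>?I. of_nat (n - 1) * (of_nat ((n - 2) choose (i - 2)) * Qf h n i))"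
      by (intro sum.cong refl) simp
    also have "\<dots> = of_nat n * (of_nat (n - 1) * (of_nat ((n - 2) choose (i - 2)) * Qf h n i))" by simp
    finally show ?thesis by (simp add: mult.assoc)
  qed
  finally show ?thesis .
qed


definition Dn :: "nat \<Rightarrow> nat \<Rightarrow> real \<Rightarrow> ennreal" where
  "Dn n i w = (\<integral>\<^sup>+v. (if 0 < w then ennreal (g v * g (v + w) * ((G (v + w) - G v)^(i-2) * G v^(n-i))) else 0) \<partial>lborel)"

lemma Qf_density:
  fixes h :: "real \<Rightarrow> ennreal"
  assumes hm[measurable]: "h \<in> borel_measurable borel"
  shows "Qf h n i = (\<integral>\<^sup>+w. h w * Dn n i w \<partial>lborel)"
proof -
  define F where "F u v = (if v < u then h (u - v) else 0) * ennreal ((G u - G v)^(i-2) * G v^(n-i))" for u v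
  have Fm[measurable]: "(\<lambda>(u,v). F u v) \<in> borel_measurable (borel \<Otimes>\<^sub>M borel)"
    unfolding F_def by measurable
  have "Qf h n i = (\<integral>\<^sup>+v. \<integral>\<^sup>+u. F u v \<partial>Gam \<partial>Gam)" unfolding Qf_def F_def ..
  also have "\<dots> = (\<integral>\<^sup>+v. ennreal (g v) * (\<integral>\<^sup>+u. F u v \<partial>Gam) \<partial>lborel)"
    by (rule nn_integral_density) measurable
  also have "\<dots> = (\<integral>\<^sup>+v. ennreal (g v) * (\<integral>\<^sup>+w. ennreal (g (v + w)) * F (v + w) v \<partial>lborel) \<partial>lborel)"
  proof (intro nn_integral_cong arg_cong2[where f="(*)"] refl)
    fix v :: real
    have "(\<integral>\<^sup>+u. F u v \<partial>Gam) = (\<integral>\<^sup>+u. ennreal (g u) * F u v \<partial>lborel)"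
      by (rule nn_integral_density) measurable
    also have "\<dots> = (\<integral>\<^sup>+u. ennreal (g u) * F u v \<partial>distr lborel borel ((+) v))"
      by (simp only: lborel_distr_plus)
    also have "\<dots> = (\<integral>\<^sup>+w. ennreal (g (v + w)) * F (v + w) v \<partial>lborel)"
    proof -
      have m1: "(+) v \<in> measurable lborel borel" by measurable
      have m2: "(\<lambda>u. ennreal (g u) * F u v) \<in> borel_measurable (distr lborel borel ((+) v))" by measurable
      show ?thesis using nn_integral_distr[OF m1 m2] by simp
    qed
    finally show "(\<integral>\<^sup>+u. F u v \<partial>Gam) = (\<integral>\<^sup>+w. ennreal (g (v + w)) * F (v + w) v \<partial>lborel)" .
  qed
  also have "\<dots> = (\<integral>\<^sup>+v. \<integral>\<^sup>+w. ennreal (g v) * (ennreal (g (v + w)) * F (v + w) v) \<partial>lborel \<partial>lborel)"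
    by (intro nn_integral_cong nn_integral_cmult[symmetric]) measurable
  also have "\<dots> = (\<integral>\<^sup>+w. \<integral>\<^sup>+v. ennreal (g v) * (ennreal (g (v + w)) * F (v + w) v) \<partial>lborel \<partial>lborel)"
    by (rule lborel_pair.Fubini') measurable
  also have "\<dots> = (\<integral>\<^sup>+w. h w * Dn n i w \<partial>lborel)"
  proof (intro nn_integral_cong)
    fix w :: real
    show "(\<integral>\<^sup>+v. ennreal (g v) * (ennreal (g (v + w)) * F (v + w) v) \<partial>lborel) = h w * Dn n i w"
    proof (cases "0 < w")
      case True
      have "(\<integral>\<^sup>+v. ennreal (g v) * (ennreal (g (v + w)) * F (v + w) v) \<partial>lborel) =
            (\<integral>\<^sup>+v. h w * ennreal (g v * g (v + w) * ((G (v + w) - G v)^(i-2) * G v^(n-i))) \<partial>lborel)"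
      proof (intro nn_integral_cong)
        fix v :: real
        have nn: "0 \<le> (G (v + w) - G v)^(i-2) * G v^(n-i)"
          using G_mono[of v "v + w"] True G_nonneg[of v] by simp
        show "ennreal (g v) * (ennreal (g (v + w)) * F (v + w) v) =
            h w * ennreal (g v * g (v + w) * ((G (v + w) - G v)^(i-2) * G v^(n-i)))"
          using True nn g_nonneg[of v] g_nonneg[of "v+w"]
          by (simp add: F_def ennreal_mult' ennreal_mult mult_ac)
      qed
      also have "\<dots> = h w * Dn n i w"
        unfolding Dn_def using True by (subst nn_integral_cmult) auto
      finally show ?thesis .
    next
      case False
      thus ?thesis by (simp add: F_def Dn_def)
    qed
  qed
  finally show ?thesis .
qed


lemma G_lip:
  assumes D: "\<And>x. g x \<le> D0" and vu: "v \<le> u"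
  shows "G u - G v \<le> D0 * (u - v)"
proof -
  have D0: "0 \<le> D0" using D[of 0] g_nonneg[of 0] by simp
  have "ennreal (G u - G v) = emeasure Gam {v<..u}" by (rule G_diff[OF vu])
  also have "\<dots> = (\<integral>\<^sup>+x. ennreal (g x) * indicator {v<..u} x \<partial>lborel)"
    by (rule emeasure_density) auto
  also have "\<dots> \<le> (\<integral>\<^sup>+x. ennreal D0 * indicator {v<..u} x \<partial>lborel)"
    by (intro nn_integral_mono mult_right_mono) (auto simp: D ennreal_leI)
  also have "\<dots> = ennreal D0 * emeasure lborel {v<..u}"
    by (subst nn_integral_cmult_indicator) auto
  also have "\<dots> = ennreal (D0 * (u - v))" using vu D0 by (simp add: ennreal_mult)
  finally show ?thesis using D0 vu by (subst (asm) ennreal_le_iff) auto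
qed

lemma Qf_bound:
  assumes D: "\<And>x. g x \<le> D0" and i: "3 \<le> i"
  shows "Qf (\<lambda>w. ennreal (1 / w)) n i \<le> ennreal D0 * Qf (\<lambda>_. 1) (n - 1) (i - 1)"
proof -
  have D0: "0 \<le> D0" using D[of 0] g_nonneg[of 0] by simp
  have e1: "i - 1 - 2 = i - 3" "n - 1 - (i - 1) = n - i" using i by auto
  have "ennreal D0 * Qf (\<lambda>_. 1) (n - 1) (i - 1) =
     (\<integral>\<^sup>+v. ennreal D0 * (\<integral>\<^sup>+u. (if v < u then 1 else 0) * ennreal ((G u - G v)^(i-3) * G v^(n-i)) \<partial>Gam) \<partial>Gam)"
    unfolding Qf_def e1 by (rule nn_integral_cmult[symmetric]) measurable
  also have "\<dots> = (\<integral>\<^sup>+v. (\<integral>\<^sup>+u. ennreal D0 * ((if v < u then 1 else 0) * ennreal ((G u - G v)^(i-3) * G v^(n-i))) \<partial>Gam) \<partial>Gam)"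
    by (intro nn_integral_cong nn_integral_cmult[symmetric]) measurable
  finally have eq: "ennreal D0 * Qf (\<lambda>_. 1) (n - 1) (i - 1) = \<dots>" .
  show ?thesis unfolding eq unfolding Qf_def
  proof (intro nn_integral_mono)
    fix u v :: real
    show "(if v < u then ennreal (1 / (u - v)) else 0) * ennreal ((G u - G v)^(i-2) * G v^(n-i))
       \<le> ennreal D0 * ((if v < u then 1 else 0) * ennreal ((G u - G v)^(i-3) * G v^(n-i)))"
    proof (cases "v < u")
      case True
      define d where "d = G u - G v"
      define e where "e = G v^(n-i)"
      have d0: "0 \<le> d" unfolding d_def using G_mono[of v u] True by simp
      have e0: "0 \<le> e" unfolding e_def using G_nonneg[of v] by simp
      have dle: "d \<le> D0 * (u - v)" unfolding d_def using G_lip[OF D, of v u] True by simp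
      have pw: "d ^ (i - 2) = d * d ^ (i - 3)" 
      proof -
        have "i - 2 = Suc (i - 3)" using i by simp
        thus ?thesis by simp
      qed
      have "1 / (u - v) * (d ^ (i - 2) * e) = (d / (u - v)) * (d ^ (i - 3) * e)"
        by (simp add: pw field_simps)
      also have "\<dots> \<le> D0 * (d ^ (i - 3) * e)"
      proof (intro mult_right_mono)
        show "d / (u - v) \<le> D0" using dle True by (simp add: divide_le_eq mult.commute)
        show "0 \<le> d ^ (i - 3) * e" using d0 e0 by simp
      qed
      finally have r: "1 / (u - v) * (d ^ (i - 2) * e) \<le> D0 * (d ^ (i - 3) * e)" .
      have "ennreal (1 / (u - v)) * ennreal (d ^ (i - 2) * e) = ennreal (1 / (u - v) * (d ^ (i - 2) * e))"
        using True d0 e0 by (intro ennreal_mult[symmetric]) auto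
      also have "\<dots> \<le> ennreal (D0 * (d ^ (i - 3) * e))" by (rule ennreal_leI[OF r])
      also have "\<dots> = ennreal D0 * ennreal (d ^ (i - 3) * e)" using D0 d0 e0 by (intro ennreal_mult) auto
      finally show ?thesis using True by (simp add: d_def e_def)
    qed simp
  qed
qed

end


context gm begin

lemma Dn_eq:
  assumes w: "w \<noteq> 0"
  shows "Dn n i w = indicator {0..1} w *
     (\<integral>\<^sup>+ z\<in>{0..1 - w}. ennreal ((G (w + z) - G z) ^ (i - 2) * g (w + z) * g z * G z ^ (n - i)) \<partial>lborel)"
proof -
  have "indicator {0..1} w *
     (\<integral>\<^sup>+ z. ennreal ((G (w + z) - G z) ^ (i - 2) * g (w + z) * g z * G z ^ (n - i)) * indicator {0..1 - w} z \<partial>lborel)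
     = (\<integral>\<^sup>+ z. indicator {0..1} w * (ennreal ((G (w + z) - G z) ^ (i - 2) * g (w + z) * g z * G z ^ (n - i)) * indicator {0..1 - w} z) \<partial>lborel)"
    by (rule nn_integral_cmult[symmetric]) measurable
  also have "\<dots> = Dn n i w" unfolding Dn_def
  proof (intro nn_integral_cong)
    fix v :: real
    show "indicator {0..1} w * (ennreal ((G (w + v) - G v) ^ (i - 2) * g (w + v) * g v * G v ^ (n - i)) * indicator {0..1 - w} v)
      = (if 0 < w then ennreal (g v * g (v + w) * ((G (v + w) - G v)^(i-2) * G v^(n-i))) else 0)"
    proof (cases "0 < w")
      case False
      hence "w < 0" using w by simp
      thus ?thesis by (simp add: indicator_def)
    next
      case True
      show ?thesis
      proof (cases "v \<in> {0..1 - w}")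
        case True
        hence "w \<in> {0..1}" using \<open>0 < w\<close> by auto
        thus ?thesis using True \<open>0 < w\<close> by (simp add: add.commute mult_ac)
      next
        case False
        hence "g v = 0 \<or> g (v + w) = 0" using g_supp[of v] g_supp[of "v + w"] by auto
        thus ?thesis using False \<open>0 < w\<close> by (auto simp: indicator_def)
      qed
    qed
  qed
  finally show ?thesis by simp
qed

end

theorem lemma10:
  fixes M :: "'a measure" and \<mu> :: "nat \<Rightarrow> 'a \<Rightarrow> real"
    and g G :: "real \<Rightarrow> real" and k :: nat and D0 :: real
  assumes "prob_space M"
    and g_nonneg: "\<And>x. 0 \<le> g x"
    and g_meas: "g \<in> borel_measurable borel"
    and g_supp: "\<And>x. x \<notin> {0..1} \<Longrightarrow> g x = 0"
    and G_def: "\<And>z. G z = (\<integral>x\<in>{0..z}. g x \<partial>lborel)"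
    and regular: "one_regular (density lborel (\<lambda>x. ennreal (g x)))"
    and indep: "prob_space.indep_vars M (\<lambda>_. borel) \<mu> {1..k}"
    and distr: "\<And>j. j \<in> {1..k} \<Longrightarrow> distributed M lborel (\<mu> j) (\<lambda>x. ennreal (g x))"
  shows "(\<forall>i\<in>{2..k}. distributed M lborel (\<lambda>\<omega>. gap_stat k (\<lambda>j. \<mu> j \<omega>) i)
            (\<lambda>u. indicator {0..1} u * ennreal (real k * (real k - 1) * real ((k - 2) choose (i - 2)))
               * (\<integral>\<^sup>+ z\<in>{0..1 - u}. ennreal ((G (u + z) - G z) ^ (i - 2) * g (u + z) * g z * G z ^ (k - i)) \<partial>lborel)))
       \<and> ((\<forall>x\<in>{0..1}. g x \<le> D0) \<longrightarrow>
          (\<forall>i\<in>{3..k}. (\<integral>\<^sup>+ \<omega>. ennreal (1 / gap_stat k (\<lambda>j. \<mu> j \<omega>) i) \<partial>M)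
                         \<le> ennreal (D0 * real k / (real i - 2))))"
proof (cases "k < 2")
  case True
  hence "{2..k} = {}" "{3..k} = {}" by auto
  thus ?thesis by (intro conjI impI ballI) auto
next
  case False
  hence k2: "2 \<le> k" by simp
  interpret M: prob_space M by fact
  let ?I = "{1..k}"
  have d1: "distributed M lborel (\<mu> 1) (\<lambda>x. ennreal (g x))" using distr k2 by simp
  have pg: "prob_space (density lborel (\<lambda>x. ennreal (g x)))"
    using M.prob_space_distr[of "\<mu> 1" lborel] d1 unfolding distributed_def by simp
  interpret gm g G
    using g_nonneg g_meas g_supp G_def pg by (rule gm.intro)
  have rv[measurable]: "\<mu> j \<in> borel_measurable M" if "j \<in> ?I" for j
  proof -
    have "\<mu> j \<in> measurable M lborel" using distr[OF that] unfolding distributed_def by blast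
    thus ?thesis by (simp only: measurable_lborel1)
  qed
  have Xm[measurable]: "(\<lambda>\<omega>. \<lambda>j\<in>?I. \<mu> j \<omega>) \<in> measurable M (PiM ?I (\<lambda>_. borel))"
    by (intro measurable_restrict rv)
  have Pd: "distr M (PiM ?I (\<lambda>_. borel)) (\<lambda>\<omega>. \<lambda>j\<in>?I. \<mu> j \<omega>) = PiM ?I (\<lambda>_. Gam)"
  proof -
    have "distr M (PiM ?I (\<lambda>_. borel)) (\<lambda>\<omega>. \<lambda>j\<in>?I. \<mu> j \<omega>) = PiM ?I (\<lambda>j. distr M borel (\<mu> j))"
      using M.indep_vars_iff_distr_eq_PiM'[where I = ?I and M' = "\<lambda>_. borel" and X = \<mu>] indep k2 rv by auto
    also have "\<dots> = PiM ?I (\<lambda>_. Gam)"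
    proof (intro PiM_cong refl)
      fix j assume j: "j \<in> ?I"
      have "distr M borel (\<mu> j) = distr M lborel (\<mu> j)" by (intro distr_cong) auto
      also have "\<dots> = Gam" using distr[OF j] unfolding distributed_def by simp
      finally show "distr M borel (\<mu> j) = Gam" .
    qed
    finally show ?thesis .
  qed
  have tr: "(\<integral>\<^sup>+\<omega>. h (gap_stat k (\<lambda>j. \<mu> j \<omega>) i) \<partial>M) = (\<integral>\<^sup>+x. h (gap_stat k x i) \<partial>PiM ?I (\<lambda>_. Gam))"
    if hm[measurable]: "h \<in> borel_measurable borel" and i: "2 \<le> i" "i \<le> k" for h :: "real \<Rightarrow> ennreal" and i
  proof -
    have gm[measurable]: "(\<lambda>x. gap_stat k x i) \<in> borel_measurable (PiM ?I (\<lambda>_. borel))"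
      using gap_meas[OF i, of borel] by simp
    have "(\<integral>\<^sup>+x. h (gap_stat k x i) \<partial>PiM ?I (\<lambda>_. Gam)) =
          (\<integral>\<^sup>+x. h (gap_stat k x i) \<partial>distr M (PiM ?I (\<lambda>_. borel)) (\<lambda>\<omega>. \<lambda>j\<in>?I. \<mu> j \<omega>))"
      by (simp only: Pd)
    also have "\<dots> = (\<integral>\<^sup>+\<omega>. h (gap_stat k (\<lambda>j\<in>?I. \<mu> j \<omega>) i) \<partial>M)"
      by (rule nn_integral_distr) measurable
    also have "\<dots> = (\<integral>\<^sup>+\<omega>. h (gap_stat k (\<lambda>j. \<mu> j \<omega>) i) \<partial>M)"
      by (intro nn_integral_cong arg_cong[where f=h] gap_cong) simp
    finally show ?thesis by simp
  qed
  have part1: "\<forall>i\<in>{2..k}. distributed M lborel (\<lambda>\<omega>. gap_stat k (\<lambda>j. \<mu> j \<omega>) i)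
            (\<lambda>u. indicator {0..1} u * ennreal (real k * (real k - 1) * real ((k - 2) choose (i - 2)))
               * (\<integral>\<^sup>+ z\<in>{0..1 - u}. ennreal ((G (u + z) - G z) ^ (i - 2) * g (u + z) * g z * G z ^ (k - i)) \<partial>lborel))"
  proof
    fix i assume "i \<in> {2..k}"
    hence i: "2 \<le> i" "i \<le> k" by auto
    let ?U = "\<lambda>\<omega>. gap_stat k (\<lambda>j. \<mu> j \<omega>) i"
    let ?C = "real k * (real k - 1) * real ((k - 2) choose (i - 2))"
    let ?Fd = "\<lambda>u. indicator {0..1} u * ennreal ?C
               * (\<integral>\<^sup>+ z\<in>{0..1 - u}. ennreal ((G (u + z) - G z) ^ (i - 2) * g (u + z) * g z * G z ^ (k - i)) \<partial>lborel)"
    have Um: "?U \<in> borel_measurable M"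
    proof -
      have "(\<lambda>\<omega>. gap_stat k (\<lambda>j\<in>?I. \<mu> j \<omega>) i) \<in> borel_measurable M"
        using measurable_compose[OF Xm gap_meas[OF i, of borel]] by simp
      moreover have "\<And>\<omega>. gap_stat k (\<lambda>j\<in>?I. \<mu> j \<omega>) i = ?U \<omega>"
        by (intro gap_cong) simp
      ultimately show ?thesis by simp
    qed
    have [measurable]: "Measurable.pred (borel \<Otimes>\<^sub>M borel) (\<lambda>x::real\<times>real. snd x \<in> {0..1 - fst x})"
      unfolding atLeastAtMost_iff by measurable
    have Fdm: "?Fd \<in> borel_measurable lborel" by measurable
    have Cnat: "(of_nat (k * (k - 1) * ((k - 2) choose (i - 2))) :: ennreal) = ennreal ?C"
    proof -
      have "real (k * (k - 1) * ((k - 2) choose (i - 2))) = ?C" using k2 by (simp add: of_nat_diff)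
      thus ?thesis by (metis ennreal_of_nat_eq_real_of_nat)
    qed
    have "distr M lborel ?U = density lborel ?Fd"
    proof (rule measure_eqI)
      show "sets (distr M lborel ?U) = sets (density lborel ?Fd)" by simp
    next
      fix A assume "A \<in> sets (distr M lborel ?U)"
      hence A[measurable]: "A \<in> sets borel" by simp
      have "emeasure (distr M lborel ?U) A = (\<integral>\<^sup>+x. indicator A x \<partial>distr M lborel ?U)"
        by (simp add: nn_integral_indicator)
      also have "\<dots> = (\<integral>\<^sup>+\<omega>. indicator A (?U \<omega>) \<partial>M)"
        by (rule nn_integral_distr) (use Um in simp_all)
      also have "\<dots> = (\<integral>\<^sup>+x. indicator A (gap_stat k x i) \<partial>PiM ?I (\<lambda>_. Gam))"
        by (rule tr[OF _ i]) measurable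
      also have "\<dots> = of_nat (k * (k - 1) * ((k - 2) choose (i - 2))) * Qf (indicator A) k i"
        by (rule core[OF i]) measurable
      also have "\<dots> = ennreal ?C * (\<integral>\<^sup>+w. indicator A w * Dn k i w \<partial>lborel)"
        by (simp only: Cnat Qf_density[of "indicator A"] borel_measurable_indicator A)
      also have "\<dots> = (\<integral>\<^sup>+w. ennreal ?C * (indicator A w * Dn k i w) \<partial>lborel)"
        by (rule nn_integral_cmult[symmetric]) (simp add: Dn_def)
      also have "\<dots> = (\<integral>\<^sup>+w. ?Fd w * indicator A w \<partial>lborel)"
      proof (rule nn_integral_cong_AE)
        show "AE w in lborel. ennreal ?C * (indicator A w * Dn k i w) = ?Fd w * indicator A w"
          using AE_lborel_singleton[of 0]
        proof eventually_elim
          case (elim w)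
          show ?case unfolding Dn_eq[OF elim] by (simp add: mult_ac)
        qed
      qed
      also have "\<dots> = emeasure (density lborel ?Fd) A"
        by (rule emeasure_density[symmetric]) (use Fdm in simp_all)
      finally show "emeasure (distr M lborel ?U) A = emeasure (density lborel ?Fd) A" .
    qed
    thus "distributed M lborel ?U ?Fd" unfolding distributed_def using Um Fdm by simp
  qed
  have part2: "(\<forall>x\<in>{0..1}. g x \<le> D0) \<longrightarrow>
          (\<forall>i\<in>{3..k}. (\<integral>\<^sup>+ \<omega>. ennreal (1 / gap_stat k (\<lambda>j. \<mu> j \<omega>) i) \<partial>M)
                         \<le> ennreal (D0 * real k / (real i - 2)))"
  proof (intro impI ballI)
    assume D01: "\<forall>x\<in>{0..1}. g x \<le> D0"
    fix i assume "i \<in> {3..k}"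
    hence i: "3 \<le> i" "i \<le> k" by auto
    have "g 0 \<le> D0" using D01 by simp
    hence D0: "0 \<le> D0" using g_nonneg[of 0] by linarith
    have D: "g x \<le> D0" for x
      using D01 g_supp[of x] D0 by (cases "x \<in> {0..1}") auto
    define B1 where "B1 = (k - 2) choose (i - 2)"
    define B2 where "B2 = (k - 3) choose (i - 3)"
    define q where "q = Qf (\<lambda>_. 1) (k - 1) (i - 1)"
    have "(\<integral>\<^sup>+ \<omega>. ennreal (1 / gap_stat k (\<lambda>j. \<mu> j \<omega>) i) \<partial>M)
        = (\<integral>\<^sup>+x. ennreal (1 / gap_stat k x i) \<partial>PiM ?I (\<lambda>_. Gam))"
      by (rule tr[of "\<lambda>w. ennreal (1 / w)" i]) (use i in \<open>measurable, auto\<close>)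
    also have "\<dots> = of_nat (k * (k - 1) * B1) * Qf (\<lambda>w. ennreal (1 / w)) k i"
      unfolding B1_def by (rule core) (use i in \<open>auto\<close>)
    also have "\<dots> \<le> of_nat (k * (k - 1) * B1) * (ennreal D0 * q)"
      unfolding q_def by (intro mult_left_mono Qf_bound D i) simp
    finally have le: "(\<integral>\<^sup>+ \<omega>. ennreal (1 / gap_stat k (\<lambda>j. \<mu> j \<omega>) i) \<partial>M) \<le> of_nat (k * (k - 1) * B1) * (ennreal D0 * q)" .
    have one: "of_nat ((k - 1) * (k - 2) * B2) * q = 1"
    proof -
      have ps: "prob_space (PiM {1..k-1} (\<lambda>_. Gam))" by (intro prob_space_PiM) (rule prob)
      have "(\<integral>\<^sup>+x. (\<lambda>_. 1::ennreal) (gap_stat (k - 1) x (i - 1)) \<partial>PiM {1..k-1} (\<lambda>_. Gam)) =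
          of_nat ((k - 1) * (k - 1 - 1) * ((k - 1 - 2) choose (i - 1 - 2))) * Qf (\<lambda>_. 1) (k - 1) (i - 1)"
        by (rule core) (use i in auto)
      moreover have "(\<integral>\<^sup>+x. (\<lambda>_. 1::ennreal) (gap_stat (k - 1) x (i - 1)) \<partial>PiM {1..k-1} (\<lambda>_. Gam)) = 1"
        using prob_space.emeasure_space_1[OF ps] by simp
      moreover have "k - 1 - 1 = k - 2" "k - 1 - 2 = k - 3" "i - 1 - 2 = i - 3" by auto
      ultimately show ?thesis unfolding q_def B2_def by simp
    qed
    have B2pos: "0 < B2" unfolding B2_def using i by simp
    have Cpos: "0 < (k - 1) * (k - 2) * B2" using i B2pos by simp
    have qtop: "q \<noteq> \<top>"
    proof
      assume "q = \<top>"
      hence "of_nat ((k - 1) * (k - 2) * B2) * q = \<top>" using Cpos by (simp add: ennreal_mult_top)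
      thus False using one by simp
    qed
    then obtain r where r: "q = ennreal r" "0 \<le> r" by (cases q) auto
    have "ennreal (real ((k - 1) * (k - 2) * B2) * r) = ennreal (real ((k - 1) * (k - 2) * B2)) * ennreal r"
      by (rule ennreal_mult) (use r in auto)
    also have "\<dots> = of_nat ((k - 1) * (k - 2) * B2) * q"
      by (simp only: ennreal_of_nat_eq_real_of_nat r(1))
    also have "\<dots> = 1" by (rule one)
    finally have r1: "real ((k - 1) * (k - 2) * B2) * r = 1"
      by (simp only: ennreal_eq_1)
    have absorb: "(i - 2) * B1 = (k - 2) * B2"
    proof -
      have e: "k - 2 - 1 = k - 3" "i - 2 - 1 = i - 3" by auto
      have "0 < i - 2" using i by simp
      from times_binomial_minus1_eq[OF this, of "k - 2"] show ?thesis
        by (simp only: e B1_def B2_def)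
    qed
    have "real (k * (k - 1) * B1) * (D0 * r) = D0 * real k / (real i - 2)"
    proof -
      have ri: "real (i - 2) = real i - 2" using i by (simp add: of_nat_diff)
      have a: "real (i - 2) * real B1 = real (k - 2) * real B2" by (simp only: of_nat_mult[symmetric] absorb)
      have ip: "0 < real i - 2" using i by simp
      have "real (k * (k - 1) * B1) * (D0 * r) * (real i - 2)
          = real k * D0 * (real (k - 1) * (real (i - 2) * real B1) * r)"
        by (simp add: ri[symmetric] mult_ac)
      also have "\<dots> = real k * D0 * (real ((k - 1) * (k - 2) * B2) * r)"
        using a by (simp add: mult_ac)
      also have "\<dots> = real k * D0" by (simp only: r1 mult_1_right)
      finally show ?thesis using ip by (simp add: field_simps)
    qed
    moreover have "of_nat (k * (k - 1) * B1) * (ennreal D0 * q) = ennreal (real (k * (k - 1) * B1) * (D0 * r))"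
      using r D0 by (simp add: ennreal_mult ennreal_of_nat_eq_real_of_nat)
    ultimately show "(\<integral>\<^sup>+ \<omega>. ennreal (1 / gap_stat k (\<lambda>j. \<mu> j \<omega>) i) \<partial>M) \<le> ennreal (D0 * real k / (real i - 2))"
      using le by simp
  qed
  show ?thesis using part1 part2 by blast
qed

end
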